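(* Let $A$ be a complex commutative completely regular semi-simple Banach algebra, $\widetilde{\sigma}:A\to A$ an algebra automorphism, and $\sigma:\Delta(A)\to\Delta(A)$ the homeomorphism (for the Gelfand topology) $\sigma(\mu)=\mu\circ\widetilde{\sigma}^{-1}$, with $\widehat{\sigma}(\widehat{a})=\widehat{a}\circ\sigma^{-1}$ the induced automorphism of $\widehat{A}$. Then the set of non-periodic points $\{\mu\in\Delta(A):\sigma^n(\mu)\neq\mu\text{ for all } n\neq 0\}$ is dense in $\Delta(A)$ if and only if $\widehat{A}$ is a maximal abelian subalgebra of $\widehat{A}\rtimes_{\widehat{\sigma}}\mathbb{Z}$. In particular, $A$ is maximal abelian in $A\rtimes_{\widetilde{\sigma}}\mathbb{Z}$ if and only if the non-periodic points of $(\Delta(A),\sigma)$ are dense in $\Delta(A)$.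
   Context: $\Delta(A)$ is the set of non-zero multiplicative linear functionals on $A$; the Gelfand transform of $a$ is $\widehat{a}(\mu)=\mu(a)$, $\widehat{A}$ is the set of Gelfand transforms, and the Gelfand topology is the weakest topology making all $\widehat{a}$ continuous. $A$ is semi-simple if the Gelfand transform is injective, and completely regular if for every Gelfand-closed $F\subseteq\Delta(A)$ and $\phi_0\in\Delta(A)\setminus F$ there is $a\in A$ with $\widehat{a}=0$ on $F$ and $\widehat{a}(\phi_0)\neq0$. For an algebra $B$ with automorphism $\Psi$, $B\rtimes_\Psi\mathbb{Z}$ is the set of finitely supported functions $\mathbb{Z}\to B$, written $\sum_n b_n\delta^n$, with pointwise linear operations and multiplication determined by $(b_n\delta^n)*(c_m\delta^m)=b_n\Psi^n(c_m)\delta^{n+m}$; $B$ is embedded as $\{b_0\delta^0\}$. *)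

theory Defs
  imports "HOL-Analysis.Analysis" "HOL-Library.Function_Algebras"
begin

text \<open>The ambient type carries a real Banach algebra structure (type classes);
  the complex structure is an explicit scalar multiplication \<open>smul\<close> extending
  the real one, bilinear w.r.t. the product and isometric.\<close>

definition complex_banach_scalar :: "(complex \<Rightarrow> 'a::{comm_ring,real_normed_algebra,banach} \<Rightarrow> 'a) \<Rightarrow> bool" where
  "complex_banach_scalar smul \<longleftrightarrow>
     (\<forall>c d x. smul (c + d) x = smul c x + smul d x) \<and>
     (\<forall>c x y. smul c (x + y) = smul c x + smul c y) \<and>
     (\<forall>c d x. smul (c * d) x = smul c (smul d x)) \<and>
     (\<forall>x. smul 1 x = x) \<and>
     (\<forall>r x. smul (complex_of_real r) x = scaleR r x) \<and>
     (\<forall>c x y. smul c (x * y) = smul c x * y) \<and>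
     (\<forall>c x. norm (smul c x) = cmod c * norm x)"

definition characters :: "(complex \<Rightarrow> 'a::comm_ring \<Rightarrow> 'a) \<Rightarrow> ('a \<Rightarrow> complex) set" where
  "characters smul = {\<mu>. \<mu> \<noteq> (\<lambda>_. 0) \<and>
     (\<forall>a b. \<mu> (a + b) = \<mu> a + \<mu> b) \<and>
     (\<forall>c a. \<mu> (smul c a) = c * \<mu> a) \<and>
     (\<forall>a b. \<mu> (a * b) = \<mu> a * \<mu> b)}"

definition gelfand :: "(complex \<Rightarrow> 'a::comm_ring \<Rightarrow> 'a) \<Rightarrow> 'a \<Rightarrow> (('a \<Rightarrow> complex) \<Rightarrow> complex)" where
  "gelfand smul a = (\<lambda>\<mu>. if \<mu> \<in> characters smul then \<mu> a else 0)"

definition gelfand_topology :: "(complex \<Rightarrow> 'a::comm_ring \<Rightarrow> 'a) \<Rightarrow> ('a \<Rightarrow> complex) topology" where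
  "gelfand_topology smul = topology_generated_by
     {{\<mu> \<in> characters smul. \<mu> a \<in> U} | a U. open U}"

definition semisimple :: "(complex \<Rightarrow> 'a::comm_ring \<Rightarrow> 'a) \<Rightarrow> bool" where
  "semisimple smul \<longleftrightarrow> inj (gelfand smul)"

definition completely_regular :: "(complex \<Rightarrow> 'a::comm_ring \<Rightarrow> 'a) \<Rightarrow> bool" where
  "completely_regular smul \<longleftrightarrow>
     (\<forall>F \<phi>0. closedin (gelfand_topology smul) F \<and> \<phi>0 \<in> characters smul - F \<longrightarrow>
        (\<exists>a. (\<forall>\<mu>\<in>F. \<mu> a = 0) \<and> \<phi>0 a \<noteq> 0))"

definition algebra_automorphism :: "(complex \<Rightarrow> 'a::comm_ring \<Rightarrow> 'a) \<Rightarrow> ('a \<Rightarrow> 'a) \<Rightarrow> bool" where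
  "algebra_automorphism smul f \<longleftrightarrow> bij f \<and>
     (\<forall>a b. f (a + b) = f a + f b) \<and>
     (\<forall>a b. f (a * b) = f a * f b) \<and>
     (\<forall>c a. f (smul c a) = smul c (f a))"

definition int_iter :: "('b \<Rightarrow> 'b) \<Rightarrow> int \<Rightarrow> 'b \<Rightarrow> 'b" where
  "int_iter f n = (if 0 \<le> n then f ^^ nat n else inv f ^^ nat (- n))"

definition cp_carrier :: "'b::ring set \<Rightarrow> (int \<Rightarrow> 'b) set" where
  "cp_carrier B = {F. (\<forall>n. F n \<in> B) \<and> finite {n. F n \<noteq> 0}}"

definition cp_add :: "(int \<Rightarrow> 'b::ring) \<Rightarrow> (int \<Rightarrow> 'b) \<Rightarrow> (int \<Rightarrow> 'b)" where
  "cp_add F G = (\<lambda>n. F n + G n)"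

definition cp_smul :: "(complex \<Rightarrow> 'b::ring \<Rightarrow> 'b) \<Rightarrow> complex \<Rightarrow> (int \<Rightarrow> 'b) \<Rightarrow> (int \<Rightarrow> 'b)" where
  "cp_smul smul c F = (\<lambda>n. smul c (F n))"

text \<open>\<open>(b_n \<delta>^n) * (c_m \<delta>^m) = b_n \<Psi>^n(c_m) \<delta>^(n+m)\<close>, extended bilinearly.\<close>
definition cp_mult :: "('b::ring \<Rightarrow> 'b) \<Rightarrow> (int \<Rightarrow> 'b) \<Rightarrow> (int \<Rightarrow> 'b) \<Rightarrow> (int \<Rightarrow> 'b)" where
  "cp_mult \<Psi> F G = (\<lambda>k. \<Sum>n\<in>{n. F n \<noteq> 0}. F n * int_iter \<Psi> n (G (k - n)))"

definition cp_emb :: "'b::ring \<Rightarrow> (int \<Rightarrow> 'b)" where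
  "cp_emb b = (\<lambda>n. if n = 0 then b else 0)"

definition cp_subalgebra :: "(complex \<Rightarrow> 'b::ring \<Rightarrow> 'b) \<Rightarrow> ('b \<Rightarrow> 'b) \<Rightarrow> 'b set \<Rightarrow> (int \<Rightarrow> 'b) set \<Rightarrow> bool" where
  "cp_subalgebra smul \<Psi> B D \<longleftrightarrow> D \<subseteq> cp_carrier B \<and> (\<lambda>_. 0) \<in> D \<and>
     (\<forall>F\<in>D. \<forall>G\<in>D. cp_add F G \<in> D \<and> cp_mult \<Psi> F G \<in> D) \<and>
     (\<forall>c. \<forall>F\<in>D. cp_smul smul c F \<in> D)"

definition cp_abelian :: "('b::ring \<Rightarrow> 'b) \<Rightarrow> (int \<Rightarrow> 'b) set \<Rightarrow> bool" where
  "cp_abelian \<Psi> D \<longleftrightarrow> (\<forall>F\<in>D. \<forall>G\<in>D. cp_mult \<Psi> F G = cp_mult \<Psi> G F)"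

definition cp_maximal_abelian :: "(complex \<Rightarrow> 'b::ring \<Rightarrow> 'b) \<Rightarrow> ('b \<Rightarrow> 'b) \<Rightarrow> 'b set \<Rightarrow> (int \<Rightarrow> 'b) set \<Rightarrow> bool" where
  "cp_maximal_abelian smul \<Psi> B D \<longleftrightarrow> cp_subalgebra smul \<Psi> B D \<and> cp_abelian \<Psi> D \<and>
     (\<forall>E. cp_subalgebra smul \<Psi> B E \<and> cp_abelian \<Psi> E \<and> D \<subseteq> E \<longrightarrow> E = D)"

definition char_map :: "('a \<Rightarrow> 'a) \<Rightarrow> ('a \<Rightarrow> complex) \<Rightarrow> ('a \<Rightarrow> complex)" where
  "char_map st = (\<lambda>\<mu>. \<mu> \<circ> inv st)"

definition hat_map :: "('a \<Rightarrow> 'a) \<Rightarrow> (('a \<Rightarrow> complex) \<Rightarrow> complex) \<Rightarrow> (('a \<Rightarrow> complex) \<Rightarrow> complex)" where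
  "hat_map st = (\<lambda>f. f \<circ> inv (char_map st))"

definition nonperiodic_points :: "(complex \<Rightarrow> 'a::comm_ring \<Rightarrow> 'a) \<Rightarrow> ('a \<Rightarrow> 'a) \<Rightarrow> ('a \<Rightarrow> complex) set" where
  "nonperiodic_points smul st =
     {\<mu> \<in> characters smul. \<forall>n::int. n \<noteq> 0 \<longrightarrow> int_iter (char_map st) n \<mu> \<noteq> \<mu>}"

end

theory Submission
  imports Defs
begin

lemma int_iter_0[simp]: "int_iter f 0 = id"
  by (simp add: int_iter_def)

lemma int_iter_succ:
  assumes "bij f"
  shows "int_iter f (n + 1) = f \<circ> int_iter f n"
proof (cases "n \<ge> 0")
  case True
  then have "nat (n+1) = Suc (nat n)" by simp
  then show ?thesis using True by (simp add: int_iter_def)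
next
  case False
  show ?thesis
  proof (cases "n = -1")
    case True
    then show ?thesis using assms by (simp add: int_iter_def) (metis bij_is_surj surj_iff)
  next
    case False2: False
    then have "nat (-n) = Suc (nat (- (n+1)))" using False by simp
    then have "int_iter f n = inv f \<circ> int_iter f (n+1)"
      using False False2 by (simp add: int_iter_def)
    then show ?thesis using assms
      by (metis bij_is_surj surj_iff o_assoc id_o)
  qed
qed

lemma int_iter_pred:
  assumes "bij f"
  shows "int_iter f (n - 1) = inv f \<circ> int_iter f n"
proof -
  have "int_iter f n = f \<circ> int_iter f (n - 1)"
    using int_iter_succ[OF assms, of "n - 1"] by simp
  then show ?thesis using assms
    by (metis bij_is_inj inj_iff o_assoc id_o)
qed

lemma int_iter_add:
  assumes "bij f"
  shows "int_iter f (n + m) = int_iter f m \<circ> int_iter f n"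
proof (induction m rule: int_induct[where k=0])
  case base
  then show ?case by simp
next
  case (step1 i)
  have "int_iter f (n + (i + 1)) = int_iter f ((n + i) + 1)" by (simp add: algebra_simps)
  also have "\<dots> = f \<circ> int_iter f (n+i)" by (rule int_iter_succ[OF assms])
  also have "\<dots> = int_iter f (i + 1) \<circ> int_iter f n"
    using step1(2) by (simp add: int_iter_succ[OF assms] fun_eq_iff)
  finally show ?case .
next
  case (step2 i)
  have "int_iter f (n + (i - 1)) = int_iter f ((n + i) - 1)" by (simp add: algebra_simps)
  also have "\<dots> = inv f \<circ> int_iter f (n+i)" by (rule int_iter_pred[OF assms])
  also have "\<dots> = int_iter f (i - 1) \<circ> int_iter f n"
    using step2(2) by (simp add: int_iter_pred[OF assms] fun_eq_iff)
  finally show ?case .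
qed

lemma int_iter_comp:
  assumes "bij f"
  shows "int_iter f n (int_iter f m x) = int_iter f (n + m) x"
  using int_iter_add[OF assms, of m n] by (simp add: add.commute)

lemma int_iter_one: "int_iter f 1 = f"
  by (simp add: int_iter_def)

lemma int_iter_minus_one: "int_iter f (-1) = inv f"
  by (simp add: int_iter_def)

lemma int_iter_induct_prop:
  assumes "bij f" "\<And>x. P x \<Longrightarrow> P (f x)" "\<And>x. P x \<Longrightarrow> P (inv f x)" "P x"
  shows "P (int_iter f n x)"
proof (induction n rule: int_induct[where k=0])
  case base then show ?case using assms(4) by simp
next
  case (step1 i) then show ?case using assms(2) by (simp add: int_iter_succ[OF assms(1)])
next
  case (step2 i) then show ?case using assms(3) by (simp add: int_iter_pred[OF assms(1)])
qed

lemma int_iter_commute_map: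
  assumes "bij f" "bij g" "\<And>x. P x \<Longrightarrow> h (f x) = g (h x)" "\<And>x. P x \<Longrightarrow> P (f x)"
    "\<And>x. P x \<Longrightarrow> P (inv f x)" "P x"
  shows "h (int_iter f n x) = int_iter g n (h x)"
proof (induction n rule: int_induct[where k=0])
  case base then show ?case by simp
next
  case (step1 i)
  have "P (int_iter f i x)" using int_iter_induct_prop[of f P] assms by blast
  then show ?case using step1 assms(3) by (simp add: int_iter_succ[OF assms(1)] int_iter_succ[OF assms(2)])
next
  case (step2 i)
  have P: "P (int_iter f (i - 1) x)" using int_iter_induct_prop[of f P] assms by blast
  have "h (int_iter f i x) = g (h (int_iter f (i - 1) x))"
    using assms(3)[OF P] int_iter_succ[OF assms(1), of "i - 1"] by simp
  then have "inv g (h (int_iter f i x)) = h (int_iter f (i - 1) x)"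
    using assms(2) by (simp add: bij_is_inj)
  then show ?case using step2 by (simp add: int_iter_pred[OF assms(2)])
qed

section \<open>Abstract commutant analysis in the crossed product\<close>

lemma cp_mult_emb_right:
  fixes \<Psi> :: "'b::comm_ring \<Rightarrow> 'b"
  assumes "\<And>n. int_iter \<Psi> n 0 = 0" and fin: "finite {n. F n \<noteq> 0}"
  shows "cp_mult \<Psi> F (cp_emb b) k = F k * int_iter \<Psi> k b"
proof -
  have "cp_mult \<Psi> F (cp_emb b) k = (\<Sum>n\<in>{n. F n \<noteq> 0}. if n = k then F k * int_iter \<Psi> k b else 0)"
    unfolding cp_mult_def cp_emb_def by (rule sum.cong) (auto simp: assms)
  also have "\<dots> = F k * int_iter \<Psi> k b"
    using fin by (cases "F k = 0") (simp_all add: sum.delta)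
  finally show ?thesis .
qed

lemma cp_mult_emb_left:
  fixes \<Psi> :: "'b::comm_ring \<Rightarrow> 'b"
  shows "cp_mult \<Psi> (cp_emb b) F k = b * F k"
proof (cases "b = 0")
  case True
  then show ?thesis by (simp add: cp_mult_def cp_emb_def)
next
  case False
  then have "{n. cp_emb b n \<noteq> 0} = {0}" by (auto simp: cp_emb_def)
  then show ?thesis by (simp add: cp_mult_def cp_emb_def)
qed

definition commutant :: "('b::comm_ring \<Rightarrow> 'b) \<Rightarrow> 'b set \<Rightarrow> (int \<Rightarrow> 'b) set" where
  "commutant \<Psi> B = {F \<in> cp_carrier B. \<forall>k. \<forall>b\<in>B. F k * int_iter \<Psi> k b = b * F k}"

locale cpsetting =
  fixes smul :: "complex \<Rightarrow> 'b::comm_ring \<Rightarrow> 'b" and \<Psi> :: "'b \<Rightarrow> 'b" and B :: "'b set"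
  assumes bij: "bij \<Psi>"
    and zeroB: "0 \<in> B"
    and addB: "\<And>x y. x \<in> B \<Longrightarrow> y \<in> B \<Longrightarrow> x + y \<in> B"
    and multB: "\<And>x y. x \<in> B \<Longrightarrow> y \<in> B \<Longrightarrow> x * y \<in> B"
    and smulB: "\<And>c x. x \<in> B \<Longrightarrow> smul c x \<in> B"
    and smul0: "\<And>c. smul c 0 = 0"
    and smul_mult: "\<And>c x y. x \<in> B \<Longrightarrow> y \<in> B \<Longrightarrow> smul c x * y = smul c (x * y)"
    and iterB: "\<And>n x. x \<in> B \<Longrightarrow> int_iter \<Psi> n x \<in> B"
    and iter0: "\<And>n. int_iter \<Psi> n 0 = 0"
    and iter_add: "\<And>n x y. x \<in> B \<Longrightarrow> y \<in> B \<Longrightarrow> int_iter \<Psi> n (x + y) = int_iter \<Psi> n x + int_iter \<Psi> n y"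
    and iter_mult: "\<And>n x y. x \<in> B \<Longrightarrow> y \<in> B \<Longrightarrow> int_iter \<Psi> n (x * y) = int_iter \<Psi> n x * int_iter \<Psi> n y"
begin

lemma sumB: "finite S \<Longrightarrow> (\<And>i. i \<in> S \<Longrightarrow> f i \<in> B) \<Longrightarrow> sum f S \<in> B"
  by (induction S rule: finite_induct) (auto simp: zeroB addB)

lemma carrier_mult:
  assumes F: "F \<in> cp_carrier B" and G: "G \<in> cp_carrier B"
  shows "cp_mult \<Psi> F G \<in> cp_carrier B"
proof -
  have fF: "finite {n. F n \<noteq> 0}" and fG: "finite {n. G n \<noteq> 0}"
    using F G by (auto simp: cp_carrier_def)
  have FB: "\<And>n. F n \<in> B" and GB: "\<And>n. G n \<in> B"
    using F G by (auto simp: cp_carrier_def)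
  have vals: "cp_mult \<Psi> F G k \<in> B" for k
    unfolding cp_mult_def
  proof (rule sumB[OF fF])
    fix n show "F n * int_iter \<Psi> n (G (k - n)) \<in> B"
      by (rule multB[OF FB iterB[OF GB]])
  qed
  have "{k. cp_mult \<Psi> F G k \<noteq> 0} \<subseteq> (\<lambda>(n, m). n + m) ` ({n. F n \<noteq> 0} \<times> {n. G n \<noteq> 0})"
  proof
    fix k assume "k \<in> {k. cp_mult \<Psi> F G k \<noteq> 0}"
    then have "(\<Sum>n\<in>{n. F n \<noteq> 0}. F n * int_iter \<Psi> n (G (k - n))) \<noteq> 0"
      by (simp add: cp_mult_def)
    then obtain n where n: "n \<in> {n. F n \<noteq> 0}" "F n * int_iter \<Psi> n (G (k - n)) \<noteq> 0"
      by (rule sum.not_neutral_contains_not_neutral)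
    then have "G (k - n) \<noteq> 0" using iter0 by auto
    then show "k \<in> (\<lambda>(n, m). n + m) ` ({n. F n \<noteq> 0} \<times> {n. G n \<noteq> 0})"
      using n by (intro image_eqI[of _ _ "(n, k - n)"]) auto
  qed
  moreover have "finite ((\<lambda>(n, m). n + m) ` ({n. F n \<noteq> 0} \<times> {n. G n \<noteq> 0}))"
    using fF fG by simp
  ultimately have "finite {k. cp_mult \<Psi> F G k \<noteq> 0}"
    by (rule finite_subset)
  then show ?thesis using vals by (simp add: cp_carrier_def)
qed

lemma commutant_mult:
  assumes F: "F \<in> commutant \<Psi> B" and G: "G \<in> commutant \<Psi> B"
  shows "cp_mult \<Psi> F G \<in> commutant \<Psi> B"
proof -
  have FB: "\<And>n. F n \<in> B" and GB: "\<And>n. G n \<in> B"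
    using F G by (auto simp: commutant_def cp_carrier_def)
  have Fc: "\<And>n b. b \<in> B \<Longrightarrow> F n * int_iter \<Psi> n b = b * F n"
   and Gc: "\<And>n b. b \<in> B \<Longrightarrow> G n * int_iter \<Psi> n b = b * G n"
    using F G by (auto simp: commutant_def)
  have "cp_mult \<Psi> F G k * int_iter \<Psi> k b = b * cp_mult \<Psi> F G k" if b: "b \<in> B" for k b
  proof -
    have "F n * int_iter \<Psi> n (G (k - n)) * int_iter \<Psi> k b = b * (F n * int_iter \<Psi> n (G (k - n)))" for n
    proof -
      have "int_iter \<Psi> k b = int_iter \<Psi> n (int_iter \<Psi> (k - n) b)"
        by (simp add: int_iter_comp[OF bij])
      then have "F n * int_iter \<Psi> n (G (k - n)) * int_iter \<Psi> k b
          = F n * int_iter \<Psi> n (G (k - n) * int_iter \<Psi> (k - n) b)"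
        using GB b iterB by (simp add: iter_mult mult.assoc)
      also have "\<dots> = F n * int_iter \<Psi> n (b * G (k - n))" using Gc b by simp
      also have "\<dots> = (F n * int_iter \<Psi> n b) * int_iter \<Psi> n (G (k - n))"
        using GB b by (simp add: iter_mult mult.assoc)
      also have "\<dots> = b * (F n * int_iter \<Psi> n (G (k - n)))"
        using Fc b by (simp add: mult.assoc)
      finally show ?thesis .
    qed
    then show ?thesis unfolding cp_mult_def
      by (simp add: sum_distrib_left sum_distrib_right)
  qed
  then show ?thesis using carrier_mult F G by (auto simp: commutant_def)
qed

lemma commutant_abelian:
  assumes F: "F \<in> commutant \<Psi> B" and G: "G \<in> commutant \<Psi> B"
  shows "cp_mult \<Psi> F G = cp_mult \<Psi> G F"
proof
  fix k
  have FB: "\<And>n. F n \<in> B" and GB: "\<And>n. G n \<in> B"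
    using F G by (auto simp: commutant_def cp_carrier_def)
  have Fc: "\<And>n b. b \<in> B \<Longrightarrow> F n * int_iter \<Psi> n b = b * F n"
   and Gc: "\<And>n b. b \<in> B \<Longrightarrow> G n * int_iter \<Psi> n b = b * G n"
    using F G by (auto simp: commutant_def)
  have fF: "finite {n. F n \<noteq> 0}" and fG: "finite {n. G n \<noteq> 0}"
    using F G by (auto simp: commutant_def cp_carrier_def)
  define T1 where "T1 = {n. F n \<noteq> 0 \<and> G (k - n) \<noteq> 0}"
  define T2 where "T2 = {n. G n \<noteq> 0 \<and> F (k - n) \<noteq> 0}"
  have "cp_mult \<Psi> F G k = (\<Sum>n\<in>{n. F n \<noteq> 0}. G (k - n) * F n)"
    unfolding cp_mult_def using Fc GB by (intro sum.cong) auto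
  also have "\<dots> = (\<Sum>n\<in>T1. G (k - n) * F n)"
    unfolding T1_def using fF by (intro sum.mono_neutral_right) auto
  also have "\<dots> = (\<Sum>n\<in>T2. F (k - n) * G n)"
    by (rule sum.reindex_bij_witness[where i="\<lambda>n. k - n" and j="\<lambda>n. k - n"])
       (auto simp: T1_def T2_def mult.commute)
  also have "\<dots> = (\<Sum>n\<in>{n. G n \<noteq> 0}. F (k - n) * G n)"
    unfolding T2_def using fG by (intro sum.mono_neutral_left) auto
  also have "\<dots> = cp_mult \<Psi> G F k"
    unfolding cp_mult_def using Gc FB by (intro sum.cong) auto
  finally show "cp_mult \<Psi> F G k = cp_mult \<Psi> G F k" .
qed

lemma commutant_subalgebra: "cp_subalgebra smul \<Psi> B (commutant \<Psi> B)"
  unfolding cp_subalgebra_def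
proof (intro conjI ballI allI)
  show "commutant \<Psi> B \<subseteq> cp_carrier B" by (auto simp: commutant_def)
  show "(\<lambda>_. 0) \<in> commutant \<Psi> B" by (auto simp: commutant_def cp_carrier_def zeroB)
  fix F G assume F: "F \<in> commutant \<Psi> B" and G: "G \<in> commutant \<Psi> B"
  show "cp_mult \<Psi> F G \<in> commutant \<Psi> B" by (rule commutant_mult[OF F G])
  have fF: "finite {n. F n \<noteq> 0}" and fG: "finite {n. G n \<noteq> 0}"
    using F G by (auto simp: commutant_def cp_carrier_def)
  have "{n. F n + G n \<noteq> 0} \<subseteq> {n. F n \<noteq> 0} \<union> {n. G n \<noteq> 0}" by auto
  then have "finite {n. F n + G n \<noteq> 0}" using fF fG by (meson finite_UnI finite_subset)
  then show "cp_add F G \<in> commutant \<Psi> B"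
    using F G by (auto simp: commutant_def cp_carrier_def cp_add_def addB iter_add algebra_simps iterB)
next
  fix c F assume F: "F \<in> commutant \<Psi> B"
  have fF: "finite {n. F n \<noteq> 0}" using F by (auto simp: commutant_def cp_carrier_def)
  have "{n. smul c (F n) \<noteq> 0} \<subseteq> {n. F n \<noteq> 0}" using smul0 by auto
  then have "finite {n. smul c (F n) \<noteq> 0}" using fF by (meson finite_subset)
  moreover have "smul c (F k) * int_iter \<Psi> k b = b * smul c (F k)" if "b \<in> B" for k b
  proof -
    have FB: "F k \<in> B" using F by (auto simp: commutant_def cp_carrier_def)
    have "smul c (F k) * int_iter \<Psi> k b = smul c (F k * int_iter \<Psi> k b)"
      using smul_mult FB iterB that by blast
    also have "\<dots> = smul c (F k * b)" using F that by (simp add: commutant_def mult.commute)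
    also have "\<dots> = smul c (F k) * b" using smul_mult FB that by simp
    finally show ?thesis by (simp add: mult.commute)
  qed
  ultimately show "cp_smul smul c F \<in> commutant \<Psi> B"
    using F by (auto simp: commutant_def cp_carrier_def cp_smul_def smulB)
qed

lemma emb_carrier: "b \<in> B \<Longrightarrow> cp_emb b \<in> cp_carrier B"
proof -
  assume b: "b \<in> B"
  have "{n. cp_emb b n \<noteq> 0} \<subseteq> {0}" by (auto simp: cp_emb_def)
  then show ?thesis using b zeroB by (auto simp: cp_carrier_def cp_emb_def intro: finite_subset)
qed

lemma emb_in_commutant: "b \<in> B \<Longrightarrow> cp_emb b \<in> commutant \<Psi> B"
  using emb_carrier by (auto simp: commutant_def cp_emb_def mult.commute)

lemma emb_subalgebra: "cp_subalgebra smul \<Psi> B (cp_emb ` B)"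
  unfolding cp_subalgebra_def
proof (intro conjI ballI allI)
  show "cp_emb ` B \<subseteq> cp_carrier B" using emb_carrier by auto
  show "(\<lambda>_. 0) \<in> cp_emb ` B"
    using zeroB by (intro image_eqI[of _ _ 0]) (auto simp: cp_emb_def)
  fix F G assume "F \<in> cp_emb ` B" "G \<in> cp_emb ` B"
  then obtain x y where xy: "x \<in> B" "y \<in> B" "F = cp_emb x" "G = cp_emb y" by auto
  have "cp_mult \<Psi> F G = cp_emb (x * y)"
    unfolding xy by (rule ext) (simp only: cp_mult_emb_left, simp add: cp_emb_def)
  then show "cp_mult \<Psi> F G \<in> cp_emb ` B" using xy multB by auto
  have "cp_add F G = cp_emb (x + y)"
    unfolding xy by (rule ext) (simp add: cp_add_def cp_emb_def)
  then show "cp_add F G \<in> cp_emb ` B" using xy addB by auto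
next
  fix c F assume "F \<in> cp_emb ` B"
  then obtain x where x: "x \<in> B" "F = cp_emb x" by auto
  have "cp_smul smul c F = cp_emb (smul c x)"
    unfolding x by (rule ext) (simp add: cp_smul_def cp_emb_def smul0)
  then show "cp_smul smul c F \<in> cp_emb ` B" using x smulB by auto
qed

lemma emb_abelian: "cp_abelian \<Psi> (cp_emb ` B)"
  unfolding cp_abelian_def
proof (intro ballI ext)
  fix F G k assume "F \<in> cp_emb ` B" "G \<in> cp_emb ` B"
  then obtain x y where xy: "F = cp_emb x" "G = cp_emb y" by auto
  show "cp_mult \<Psi> F G k = cp_mult \<Psi> G F k"
    unfolding xy cp_mult_emb_left by (simp add: cp_emb_def mult.commute)
qed

theorem maximal_iff:
  "cp_maximal_abelian smul \<Psi> B (cp_emb ` B) \<longleftrightarrow>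
   (\<forall>k. k \<noteq> 0 \<longrightarrow> (\<forall>x\<in>B. (\<forall>b\<in>B. x * int_iter \<Psi> k b = b * x) \<longrightarrow> x = 0))"
proof
  assume max: "cp_maximal_abelian smul \<Psi> B (cp_emb ` B)"
  have ab: "cp_abelian \<Psi> (commutant \<Psi> B)"
    unfolding cp_abelian_def using commutant_abelian by blast
  have sub: "cp_emb ` B \<subseteq> commutant \<Psi> B" using emb_in_commutant by blast
  have "\<forall>E. cp_subalgebra smul \<Psi> B E \<and> cp_abelian \<Psi> E \<and> cp_emb ` B \<subseteq> E \<longrightarrow> E = cp_emb ` B"
    using max unfolding cp_maximal_abelian_def by (elim conjE)
  then have "commutant \<Psi> B = cp_emb ` B"
    using commutant_subalgebra ab sub by simp
  show "\<forall>k. k \<noteq> 0 \<longrightarrow> (\<forall>x\<in>B. (\<forall>b\<in>B. x * int_iter \<Psi> k b = b * x) \<longrightarrow> x = 0)"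
  proof (intro allI impI ballI)
    fix k x assume k: "k \<noteq> 0" and x: "x \<in> B" and c: "\<forall>b\<in>B. x * int_iter \<Psi> k b = b * x"
    define F where "F = (\<lambda>n. if n = k then x else 0)"
    have "{n. F n \<noteq> 0} \<subseteq> {k}" by (auto simp: F_def)
    then have "F \<in> commutant \<Psi> B"
      using x zeroB c by (auto simp: commutant_def cp_carrier_def F_def intro: finite_subset)
    then obtain y where "F = cp_emb y" using \<open>commutant \<Psi> B = cp_emb ` B\<close> by auto
    then have "F k = 0" using k by (simp add: cp_emb_def)
    then show "x = 0" by (simp add: F_def)
  qed
next
  assume cond: "\<forall>k. k \<noteq> 0 \<longrightarrow> (\<forall>x\<in>B. (\<forall>b\<in>B. x * int_iter \<Psi> k b = b * x) \<longrightarrow> x = 0)"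
  have "E = cp_emb ` B" if E: "cp_subalgebra smul \<Psi> B E" "cp_abelian \<Psi> E" "cp_emb ` B \<subseteq> E" for E
  proof
    show "E \<subseteq> cp_emb ` B"
    proof
      fix F assume F: "F \<in> E"
      have FB: "\<And>n. F n \<in> B" using E(1) F by (auto simp: cp_subalgebra_def cp_carrier_def)
      have "F k = 0" if k: "k \<noteq> 0" for k
      proof -
        have "F k * int_iter \<Psi> k b = b * F k" if b: "b \<in> B" for b
        proof -
          have "cp_emb b \<in> E" using E(3) b by auto
          then have "cp_mult \<Psi> F (cp_emb b) = cp_mult \<Psi> (cp_emb b) F"
            using E(2) F by (auto simp: cp_abelian_def)
          moreover have "finite {n. F n \<noteq> 0}" using E(1) F by (auto simp: cp_subalgebra_def cp_carrier_def)
          ultimately show ?thesis using cp_mult_emb_right[OF iter0] cp_mult_emb_left by metis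
        qed
        then show ?thesis using cond k FB by blast
      qed
      then have "F = cp_emb (F 0)" by (auto simp: cp_emb_def)
      then show "F \<in> cp_emb ` B" using FB by blast
    qed
  qed (use that in auto)
  then show "cp_maximal_abelian smul \<Psi> B (cp_emb ` B)"
    unfolding cp_maximal_abelian_def using emb_subalgebra emb_abelian by blast
qed

end

section \<open>Characters\<close>

context
  fixes smul :: "complex \<Rightarrow> 'a::comm_ring \<Rightarrow> 'a"
begin

lemma char_add: "\<mu> \<in> characters smul \<Longrightarrow> \<mu> (a + b) = \<mu> a + \<mu> b"
  by (simp add: characters_def)
lemma char_mult: "\<mu> \<in> characters smul \<Longrightarrow> \<mu> (a * b) = \<mu> a * \<mu> b"
  by (simp add: characters_def)
lemma char_smul: "\<mu> \<in> characters smul \<Longrightarrow> \<mu> (smul c a) = c * \<mu> a"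
  by (simp add: characters_def)
lemma char_zero: "\<mu> \<in> characters smul \<Longrightarrow> \<mu> 0 = 0"
  using char_add[of \<mu> 0 0] by simp
lemma char_diff: "\<mu> \<in> characters smul \<Longrightarrow> \<mu> (a - b) = \<mu> a - \<mu> b"
  using char_add[of \<mu> "a - b" b] by (simp add: algebra_simps)

lemma gelfand_add: "gelfand smul (a + b) = gelfand smul a + gelfand smul b"
  by (rule ext) (simp add: gelfand_def char_add)
lemma gelfand_mult: "gelfand smul (a * b) = gelfand smul a * gelfand smul b"
  by (rule ext) (simp add: gelfand_def char_mult)
lemma gelfand_smul: "gelfand smul (smul c a) = (\<lambda>\<mu>. c * gelfand smul a \<mu>)"
  by (rule ext) (simp add: gelfand_def char_smul)
lemma gelfand_zero: "gelfand smul 0 = 0"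
  by (rule ext) (simp add: gelfand_def char_zero)

lemma semisimple_zero:
  assumes "semisimple smul" "\<And>\<mu>. \<mu> \<in> characters smul \<Longrightarrow> \<mu> x = 0"
  shows "x = 0"
proof -
  have "gelfand smul x = gelfand smul 0"
    using assms(2) by (auto simp: gelfand_def char_zero)
  then show ?thesis using assms(1) by (simp add: semisimple_def inj_eq)
qed

lemma semisimple_eq:
  assumes "semisimple smul" "\<And>\<mu>. \<mu> \<in> characters smul \<Longrightarrow> \<mu> x = \<mu> y"
  shows "x = y"
  using semisimple_zero[OF assms(1), of "x - y"] assms(2) by (simp add: char_diff)

lemma aut_inv:
  assumes "algebra_automorphism smul g"
  shows "algebra_automorphism smul (inv g)"
proof -
  have b: "bij g" and a: "\<And>x y. g (x + y) = g x + g y" and m: "\<And>x y. g (x * y) = g x * g y"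
    and s: "\<And>c x. g (smul c x) = smul c (g x)"
    using assms by (auto simp: algebra_automorphism_def)
  have gi: "\<And>x. g (inv g x) = x" using b by (simp add: bij_is_surj surj_f_inv_f)
  have ig: "\<And>x. inv g (g x) = x" using b by (simp add: bij_is_inj)
  show ?thesis unfolding algebra_automorphism_def
  proof (intro conjI allI)
    show "bij (inv g)" using b by (simp add: bij_imp_bij_inv)
    fix x y c
    show "inv g (x + y) = inv g x + inv g y" by (metis a gi ig)
    show "inv g (x * y) = inv g x * inv g y" by (metis m gi ig)
    show "inv g (smul c x) = smul c (inv g x)" by (metis s gi ig)
  qed
qed

lemma aut_comp:
  assumes "algebra_automorphism smul f" "algebra_automorphism smul g"
  shows "algebra_automorphism smul (f \<circ> g)"
  using assms by (auto simp: algebra_automorphism_def bij_comp)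

lemma aut_id: "algebra_automorphism smul id"
  by (simp add: algebra_automorphism_def)

lemma aut_int_iter:
  assumes "algebra_automorphism smul g"
  shows "algebra_automorphism smul (int_iter g n)"
proof -
  have b: "bij g" using assms by (simp add: algebra_automorphism_def)
  show ?thesis
  proof (induction n rule: int_induct[where k=0])
    case base then show ?case using aut_id by (simp add: id_def)
  next
    case (step1 i) then show ?case using aut_comp[OF assms step1(2)] by (simp only: int_iter_succ[OF b])
  next
    case (step2 i) then show ?case using aut_comp[OF aut_inv[OF assms] step2(2)] by (simp only: int_iter_pred[OF b])
  qed
qed

lemma aut_zero: "algebra_automorphism smul g \<Longrightarrow> g 0 = 0"
  unfolding algebra_automorphism_def by (metis add_cancel_right_right)

lemma char_comp_aut:
  assumes "algebra_automorphism smul g" "\<mu> \<in> characters smul"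
  shows "\<mu> \<circ> g \<in> characters smul"
proof -
  have b: "bij g" using assms by (simp add: algebra_automorphism_def)
  have "\<mu> \<noteq> (\<lambda>_. 0)" using assms(2) by (simp add: characters_def)
  then obtain x where "\<mu> x \<noteq> 0" by (auto simp: fun_eq_iff)
  then have "(\<mu> \<circ> g) (inv g x) \<noteq> 0" using b by (simp add: bij_is_surj surj_f_inv_f)
  then have "\<mu> \<circ> g \<noteq> (\<lambda>_. 0)" by (metis comp_apply)
  then show ?thesis using assms by (auto simp: characters_def algebra_automorphism_def)
qed

lemma char_comp_aut_iff:
  assumes "algebra_automorphism smul g"
  shows "\<mu> \<circ> g \<in> characters smul \<longleftrightarrow> \<mu> \<in> characters smul"
proof
  assume "\<mu> \<circ> g \<in> characters smul"
  then have "\<mu> \<circ> g \<circ> inv g \<in> characters smul" using char_comp_aut aut_inv assms by blast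
  moreover have "\<mu> \<circ> g \<circ> inv g = \<mu>" using assms
    by (auto simp: algebra_automorphism_def fun_eq_iff bij_is_surj surj_f_inv_f)
  ultimately show "\<mu> \<in> characters smul" by simp
qed (rule char_comp_aut[OF assms])

end

lemma bij_comp_inv: "bij f \<Longrightarrow> f \<circ> inv f = id"
  by (metis bij_is_surj surj_iff)
lemma bij_inv_comp: "bij f \<Longrightarrow> inv f \<circ> f = id"
  by (metis bij_is_inj inj_iff)
lemma bij_comp_inv': "bij f \<Longrightarrow> g \<circ> f \<circ> inv f = g"
  by (simp add: o_assoc[symmetric] bij_comp_inv)
lemma bij_inv_comp': "bij f \<Longrightarrow> g \<circ> inv f \<circ> f = g"
  by (simp add: o_assoc[symmetric] bij_inv_comp)

lemma inv_char_map:
  assumes "bij st"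
  shows "inv (char_map st) = (\<lambda>\<mu>. \<mu> \<circ> st)"
  by (rule inv_unique_comp)
     (use assms in \<open>auto simp: char_map_def fun_eq_iff bij_is_surj surj_f_inv_f bij_is_inj bij_comp_inv' bij_inv_comp'\<close>)

lemma bij_char_map: "bij st \<Longrightarrow> bij (char_map st)"
  by (rule o_bij[where g="\<lambda>\<mu>. \<mu> \<circ> st"])
     (auto simp: char_map_def fun_eq_iff bij_is_surj surj_f_inv_f bij_is_inj bij_comp_inv' bij_inv_comp')

lemma hat_map_eq: "bij st \<Longrightarrow> hat_map st f = (\<lambda>\<mu>. f (\<mu> \<circ> st))"
  by (simp add: hat_map_def inv_char_map o_def)

lemma inv_hat_map:
  assumes "bij st"
  shows "inv (hat_map st) = (\<lambda>f. f \<circ> char_map st)"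
  by (rule inv_unique_comp)
     (use assms in \<open>auto simp: hat_map_eq char_map_def fun_eq_iff bij_is_surj surj_f_inv_f bij_is_inj bij_comp_inv' bij_inv_comp'\<close>)

lemma bij_hat_map: "bij st \<Longrightarrow> bij (hat_map st)"
  by (rule o_bij[where g="\<lambda>f. f \<circ> char_map st"])
     (auto simp: hat_map_eq char_map_def fun_eq_iff bij_is_surj surj_f_inv_f bij_is_inj bij_comp_inv' bij_inv_comp')

lemma int_iter_char_map:
  assumes b: "bij st"
  shows "int_iter (char_map st) n \<mu> = \<mu> \<circ> int_iter st (- n)"
proof (induction n arbitrary: \<mu> rule: int_induct[where k=0])
  case base then show ?case by simp
next
  case (step1 i)
  have "int_iter st (- (i + 1)) = int_iter st (-1 + - i)" by (rule arg_cong[where f="int_iter st"]) simp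
  also have "\<dots> = int_iter st (- i) \<circ> inv st" by (simp only: int_iter_add[OF b] int_iter_minus_one)
  finally have f: "int_iter st (- (i + 1)) = int_iter st (- i) \<circ> inv st" .
  have e: "\<mu> \<circ> int_iter st (- (i + 1)) = \<mu> \<circ> int_iter st (- i) \<circ> inv st" by (simp only: f o_assoc)
  have "int_iter (char_map st) (i + 1) \<mu> = char_map st (int_iter (char_map st) i \<mu>)"
    by (simp only: int_iter_succ[OF bij_char_map[OF b]] comp_apply)
  also have "\<dots> = char_map st (\<mu> \<circ> int_iter st (- i))" by (simp only: step1(2))
  also have "\<dots> = \<mu> \<circ> int_iter st (- i) \<circ> inv st" by (simp add: char_map_def)
  finally show ?case by (simp only: e)
next
  case (step2 i)
  have "int_iter st (- (i - 1)) = int_iter st (1 + - i)" by (rule arg_cong[where f="int_iter st"]) simp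
  also have "\<dots> = int_iter st (- i) \<circ> st" by (simp only: int_iter_add[OF b] int_iter_one)
  finally have f: "int_iter st (- (i - 1)) = int_iter st (- i) \<circ> st" .
  have e: "\<mu> \<circ> int_iter st (- (i - 1)) = \<mu> \<circ> int_iter st (- i) \<circ> st" by (simp only: f o_assoc)
  have "int_iter (char_map st) (i - 1) \<mu> = inv (char_map st) (int_iter (char_map st) i \<mu>)"
    by (simp only: int_iter_pred[OF bij_char_map[OF b]] comp_apply)
  also have "\<dots> = inv (char_map st) (\<mu> \<circ> int_iter st (- i))" by (simp only: step2(2))
  also have "\<dots> = \<mu> \<circ> int_iter st (- i) \<circ> st" by (simp add: inv_char_map[OF b])
  finally show ?case by (simp only: e)
qed


section \<open>Automatic continuity of characters\<close>

lemma char_bound: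
  fixes smul :: "complex \<Rightarrow> 'a::{comm_ring,real_normed_algebra,banach} \<Rightarrow> 'a"
  assumes cbs: "complex_banach_scalar smul" and mu: "\<mu> \<in> characters smul"
  shows "cmod (\<mu> x) \<le> norm x"
proof (rule ccontr)
  assume "\<not> cmod (\<mu> x) \<le> norm x"
  then have lt: "norm x < cmod (\<mu> x)" by simp
  define l where "l = \<mu> x"
  have l0: "l \<noteq> 0" using lt norm_ge_zero[of x] by (auto simp: l_def)
  define y where "y = smul (1 / l) x"
  have ny: "norm y < 1"
    using cbs lt l0 by (simp add: y_def complex_banach_scalar_def norm_divide l_def divide_less_eq)
  have my: "\<mu> y = 1" using l0 by (simp add: y_def char_smul[OF mu] l_def)
  define p where "p = (\<lambda>n. ((\<lambda>z. y * z) ^^ n) y)"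
  have pS: "p (Suc n) = y * p n" for n by (simp add: p_def)
  have p0: "p 0 = y" by (simp add: p_def)
  have np: "norm (p n) \<le> norm y ^ Suc n" for n
  proof (induction n)
    case 0 then show ?case by (simp add: p0)
  next
    case (Suc n)
    have "norm (p (Suc n)) \<le> norm y * norm (p n)" by (simp add: pS norm_mult_ineq)
    also have "\<dots> \<le> norm y * norm y ^ Suc n" using Suc by (simp add: mult_left_mono)
    finally show ?case by simp
  qed
  have "summable (\<lambda>n. norm y ^ Suc n)"
    using ny by (simp add: summable_mult summable_geometric)
  then have "summable p" using np by (rule summable_comparison_test'[where N=0])
  then have ps: "p sums (suminf p)" by (rule summable_sums)
  define s where "s = suminf p"
  have "(\<lambda>n. y * p n) sums (y * s)" using ps by (simp add: s_def sums_mult)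
  then have "(\<lambda>n. p (Suc n)) sums (y * s)" by (simp add: pS)
  then have "p sums (y * s + y)" by (simp add: sums_Suc_iff p0)
  then have "s = y * s + y" using ps by (simp add: s_def sums_unique2)
  then have "\<mu> s = \<mu> y * \<mu> s + \<mu> y" by (metis char_add[OF mu] char_mult[OF mu])
  then show False using my by simp
qed


definition Cond2 :: "('a::comm_ring \<Rightarrow> 'a) \<Rightarrow> bool" where
  "Cond2 st \<longleftrightarrow> (\<forall>k. k \<noteq> 0 \<longrightarrow> (\<forall>x\<in>UNIV. (\<forall>b\<in>UNIV. x * int_iter st k b = b * x) \<longrightarrow> x = 0))"
definition Cond1 :: "(complex \<Rightarrow> 'a::comm_ring \<Rightarrow> 'a) \<Rightarrow> ('a \<Rightarrow> 'a) \<Rightarrow> bool" where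
  "Cond1 smul st \<longleftrightarrow> (\<forall>k. k \<noteq> 0 \<longrightarrow> (\<forall>x\<in>range (gelfand smul).
   (\<forall>b\<in>range (gelfand smul). x * int_iter (hat_map st) k b = b * x) \<longrightarrow> x = 0))"
definition PerCond :: "(complex \<Rightarrow> 'a::comm_ring \<Rightarrow> 'a) \<Rightarrow> ('a \<Rightarrow> 'a) \<Rightarrow> bool" where
  "PerCond smul st \<longleftrightarrow> (\<forall>k. k \<noteq> 0 \<longrightarrow> (\<forall>x. (\<forall>\<mu>\<in>characters smul. \<mu> x \<noteq> 0 \<longrightarrow>
   (\<forall>b. \<mu> (int_iter st k b) = \<mu> b)) \<longrightarrow> x = 0))"

context
  fixes smul :: "complex \<Rightarrow> 'a::{comm_ring,real_normed_algebra,banach} \<Rightarrow> 'a"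
    and st :: "'a \<Rightarrow> 'a"
  assumes cbs: "complex_banach_scalar smul"
    and ss: "semisimple smul"
    and aut: "algebra_automorphism smul st"
begin

lemma st_bij: "bij st" using aut by (simp add: algebra_automorphism_def)

lemma iter_aut: "algebra_automorphism smul (int_iter st n)"
  by (rule aut_int_iter[OF aut])

lemma iter_add': "int_iter st n (x + y) = int_iter st n x + int_iter st n y"
  using iter_aut by (simp add: algebra_automorphism_def)
lemma iter_mult': "int_iter st n (x * y) = int_iter st n x * int_iter st n y"
  using iter_aut by (simp add: algebra_automorphism_def)
lemma iter_zero': "int_iter st n 0 = 0"
  using iter_aut by (rule aut_zero)

lemma smul_zero': "smul c 0 = 0"
proof -
  have "norm (smul c 0) = 0" using cbs by (simp add: complex_banach_scalar_def)
  then show ?thesis by simp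
qed

lemma setting2: "cpsetting smul st UNIV"
  by unfold_locales
     (use cbs in \<open>auto simp: st_bij smul_zero' iter_zero' iter_add' iter_mult' complex_banach_scalar_def\<close>)

lemma hat_map_gelfand: "hat_map st (gelfand smul b) = gelfand smul (st b)"
proof
  fix \<mu>
  show "hat_map st (gelfand smul b) \<mu> = gelfand smul (st b) \<mu>"
    using char_comp_aut_iff[OF aut, of \<mu>] by (simp add: hat_map_eq[OF st_bij] gelfand_def)
qed

lemma iter_gelfand: "int_iter (hat_map st) n (gelfand smul b) = gelfand smul (int_iter st n b)"
  by (rule int_iter_commute_map[where P="\<lambda>_. True", symmetric])
     (auto simp: st_bij bij_hat_map hat_map_gelfand)

lemma setting1: "cpsetting (\<lambda>c f \<mu>. c * f \<mu>) (hat_map st) (range (gelfand smul))"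
proof unfold_locales
  show "bij (hat_map st)" by (simp add: bij_hat_map st_bij)
  show "0 \<in> range (gelfand smul)" using gelfand_zero[of smul] by (metis rangeI)
  fix x y assume "x \<in> range (gelfand smul)" "y \<in> range (gelfand smul)"
  then obtain a b where ab: "x = gelfand smul a" "y = gelfand smul b" by auto
  show "x + y \<in> range (gelfand smul)" using gelfand_add[of smul a b] ab by (metis rangeI)
  show "x * y \<in> range (gelfand smul)" using gelfand_mult[of smul a b] ab by (metis rangeI)
  fix c
  show "(\<lambda>\<mu>. c * x \<mu>) * y = (\<lambda>\<mu>. c * (x * y) \<mu>)" by (simp add: fun_eq_iff)
  fix n
  show "int_iter (hat_map st) n (x + y) = int_iter (hat_map st) n x + int_iter (hat_map st) n y"
    unfolding ab gelfand_add[symmetric] iter_gelfand by (simp add: iter_add' gelfand_add)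
  show "int_iter (hat_map st) n (x * y) = int_iter (hat_map st) n x * int_iter (hat_map st) n y"
    unfolding ab gelfand_mult[symmetric] iter_gelfand by (simp add: iter_mult' gelfand_mult)
next
  fix c x assume "x \<in> range (gelfand smul)"
  then obtain a where a: "x = gelfand smul a" by auto
  show "(\<lambda>\<mu>. c * x \<mu>) \<in> range (gelfand smul)" using gelfand_smul[of smul c a] a by (metis rangeI)
next
  fix c show "(\<lambda>\<mu>. c * (0::('a \<Rightarrow> complex) \<Rightarrow> complex) \<mu>) = 0" by (simp add: fun_eq_iff)
next
  fix n x assume "x \<in> range (gelfand smul)"
  then obtain a where a: "x = gelfand smul a" by auto
  show "int_iter (hat_map st) n x \<in> range (gelfand smul)" unfolding a iter_gelfand by simp
next
  fix n
  show "int_iter (hat_map st) n 0 = 0"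
    using iter_gelfand[of n 0] by (simp add: gelfand_zero iter_zero')
qed

lemma max2_iff: "cp_maximal_abelian smul st UNIV (cp_emb ` UNIV) \<longleftrightarrow> Cond2 st"
  using cpsetting.maximal_iff[OF setting2] by (simp add: Cond2_def)

lemma max1_iff: "cp_maximal_abelian (\<lambda>c f \<mu>. c * f \<mu>) (hat_map st) (range (gelfand smul))
     (cp_emb ` range (gelfand smul)) \<longleftrightarrow> Cond1 smul st"
  using cpsetting.maximal_iff[OF setting1] by (simp add: Cond1_def)

lemma gelfand_inj: "gelfand smul x = gelfand smul y \<longleftrightarrow> x = y"
  using ss by (auto simp: semisimple_def inj_eq)

lemma Cond1_iff: "Cond1 smul st \<longleftrightarrow> Cond2 st"
proof -
  have eq: "(\<forall>b\<in>range (gelfand smul). gelfand smul x * int_iter (hat_map st) k b = b * gelfand smul x)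
      \<longleftrightarrow> (\<forall>b. x * int_iter st k b = b * x)" for x k
    by (simp add: iter_gelfand gelfand_mult[symmetric] gelfand_inj)
  have z: "gelfand smul x = 0 \<longleftrightarrow> x = 0" for x
    using gelfand_inj[of x 0] by (simp add: gelfand_zero)
  show ?thesis unfolding Cond1_def Cond2_def using eq z by auto
qed

lemma commute_iff:
  "(\<forall>b. x * int_iter st k b = b * x) \<longleftrightarrow>
   (\<forall>\<mu>\<in>characters smul. \<mu> x \<noteq> 0 \<longrightarrow> (\<forall>b. \<mu> (int_iter st k b) = \<mu> b))"
proof
  assume c: "\<forall>b. x * int_iter st k b = b * x"
  show "\<forall>\<mu>\<in>characters smul. \<mu> x \<noteq> 0 \<longrightarrow> (\<forall>b. \<mu> (int_iter st k b) = \<mu> b)"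
  proof (intro ballI impI allI)
    fix \<mu> b assume mu: "\<mu> \<in> characters smul" and nz: "\<mu> x \<noteq> 0"
    have "\<mu> x * \<mu> (int_iter st k b) = \<mu> b * \<mu> x"
      using c char_mult[OF mu] by metis
    then show "\<mu> (int_iter st k b) = \<mu> b" using nz by (simp add: mult.commute)
  qed
next
  assume c: "\<forall>\<mu>\<in>characters smul. \<mu> x \<noteq> 0 \<longrightarrow> (\<forall>b. \<mu> (int_iter st k b) = \<mu> b)"
  show "\<forall>b. x * int_iter st k b = b * x"
  proof
    fix b
    show "x * int_iter st k b = b * x"
    proof (rule semisimple_eq[OF ss])
      fix \<mu> assume mu: "\<mu> \<in> characters smul"
      show "\<mu> (x * int_iter st k b) = \<mu> (b * x)"
        using c mu by (cases "\<mu> x = 0") (auto simp: char_mult[OF mu])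
    qed
  qed
qed

lemma Cond2_iff: "Cond2 st \<longleftrightarrow> PerCond smul st"
  unfolding Cond2_def PerCond_def using commute_iff by simp

end


section \<open>Topological part\<close>

lemma continuous_map_cmult:
  fixes f :: "'x \<Rightarrow> 'b::real_normed_algebra"
  shows "continuous_map X euclidean f \<Longrightarrow> continuous_map X euclidean (\<lambda>x. c * f x)"
  by (simp add: continuous_map_atin tendsto_mult_left)

lemma continuous_map_mult':
  fixes f g :: "'x \<Rightarrow> 'b::real_normed_algebra"
  shows "continuous_map X euclidean f \<Longrightarrow> continuous_map X euclidean g \<Longrightarrow> continuous_map X euclidean (\<lambda>x. f x * g x)"
  by (simp add: continuous_map_atin tendsto_mult)

lemma closedin_eq_family:
  fixes f g :: "'i \<Rightarrow> 'x \<Rightarrow> 'b::real_normed_vector"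
  assumes "\<And>i. continuous_map X euclidean (f i)" "\<And>i. continuous_map X euclidean (g i)"
  shows "closedin X {x \<in> topspace X. \<forall>i. f i x = g i x}"
proof -
  have c: "closedin X {x \<in> topspace X. f i x - g i x \<in> {0}}" for i
    by (rule closedin_continuous_map_preimage) (auto intro: continuous_map_diff assms)
  have "{x \<in> topspace X. \<forall>i. f i x = g i x} = \<Inter> (range (\<lambda>i. {x \<in> topspace X. f i x - g i x \<in> {0}}))"
    by auto
  then show ?thesis using c by (metis (no_types, lifting) closedin_Inter rangeE range_eqI empty_iff)
qed

abbreviation PT :: "('a \<Rightarrow> complex) topology" where
  "PT \<equiv> product_topology (\<lambda>_. euclidean) UNIV"

lemma topspace_PT [simp]: "topspace PT = UNIV"
  by simp

lemma proj_cont: "continuous_map PT euclidean (\<lambda>\<mu>. \<mu> x)"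
  using continuous_map_product_projection[of x UNIV "\<lambda>_. euclidean"] by simp

lemma gelfand_topspace: "topspace (gelfand_topology smul) = characters smul"
  unfolding gelfand_topology_def topology_generated_by_topspace
proof
  show "characters smul \<subseteq> \<Union> {{\<mu> \<in> characters smul. \<mu> a \<in> U} |a U. open U}"
    by (auto intro!: exI[of _ UNIV])
qed auto

lemma gelfand_openin_basic: "open U \<Longrightarrow> openin (gelfand_topology smul) {\<mu> \<in> characters smul. \<mu> a \<in> U}"
  unfolding gelfand_topology_def by (rule topology_generated_by_Basis) blast

lemma gelfand_cont_PT: "continuous_map (gelfand_topology smul) PT (\<lambda>\<mu>. \<mu>)"
  unfolding continuous_map_componentwise_UNIV
proof
  fix k
  show "continuous_map (gelfand_topology smul) euclidean (\<lambda>x. x k)"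
    unfolding continuous_map_def gelfand_topspace
    using gelfand_openin_basic by (auto simp: open_openin[symmetric])
qed

lemma PT_open_gelfand:
  assumes "openin PT S"
  shows "openin (gelfand_topology smul) (characters smul \<inter> S)"
proof -
  have "openin (gelfand_topology smul) {x \<in> topspace (gelfand_topology smul). x \<in> S}"
    by (rule openin_continuous_map_preimage[OF gelfand_cont_PT assms])
  moreover have "{x \<in> topspace (gelfand_topology smul). x \<in> S} = characters smul \<inter> S"
    by (auto simp: gelfand_topspace)
  ultimately show ?thesis by simp
qed

context
  fixes smul :: "complex \<Rightarrow> 'a::{comm_ring,real_normed_algebra,banach} \<Rightarrow> 'a"
    and st :: "'a \<Rightarrow> 'a"
  assumes cbs: "complex_banach_scalar smul"
    and ss: "semisimple smul"
    and aut: "algebra_automorphism smul st"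
    and cr: "completely_regular smul"
begin

lemma nonperiodic_iff:
  "\<mu> \<in> nonperiodic_points smul st \<longleftrightarrow>
   \<mu> \<in> characters smul \<and> (\<forall>k. k \<noteq> 0 \<longrightarrow> \<not> (\<forall>b. \<mu> (int_iter st k b) = \<mu> b))"
proof -
  have b: "bij st" using aut by (simp add: algebra_automorphism_def)
  have "(int_iter (char_map st) n \<mu> \<noteq> \<mu>) \<longleftrightarrow> \<not> (\<forall>b. \<mu> (int_iter st (- n) b) = \<mu> b)" for n
    by (simp add: int_iter_char_map[OF b] fun_eq_iff)
  then have "(\<forall>n::int. n \<noteq> 0 \<longrightarrow> int_iter (char_map st) n \<mu> \<noteq> \<mu>) \<longleftrightarrow>
      (\<forall>n::int. n \<noteq> 0 \<longrightarrow> \<not> (\<forall>b. \<mu> (int_iter st (- n) b) = \<mu> b))"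
    by simp
  also have "\<dots> \<longleftrightarrow> (\<forall>k. k \<noteq> 0 \<longrightarrow> \<not> (\<forall>b. \<mu> (int_iter st k b) = \<mu> b))"
  proof
    assume h: "\<forall>n::int. n \<noteq> 0 \<longrightarrow> \<not> (\<forall>b. \<mu> (int_iter st (- n) b) = \<mu> b)"
    show "\<forall>k. k \<noteq> 0 \<longrightarrow> \<not> (\<forall>b. \<mu> (int_iter st k b) = \<mu> b)"
    proof (intro allI impI)
      fix k :: int assume "k \<noteq> 0"
      then show "\<not> (\<forall>b. \<mu> (int_iter st k b) = \<mu> b)" using h[rule_format, of "- k"] by simp
    qed
  next
    assume h: "\<forall>k::int. k \<noteq> 0 \<longrightarrow> \<not> (\<forall>b. \<mu> (int_iter st k b) = \<mu> b)"
    show "\<forall>n::int. n \<noteq> 0 \<longrightarrow> \<not> (\<forall>b. \<mu> (int_iter st (- n) b) = \<mu> b)"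
    proof (intro allI impI)
      fix n :: int assume "n \<noteq> 0"
      then show "\<not> (\<forall>b. \<mu> (int_iter st (- n) b) = \<mu> b)" using h[rule_format, of "- n"] by simp
    qed
  qed
  finally have "(\<forall>n::int. n \<noteq> 0 \<longrightarrow> int_iter (char_map st) n \<mu> \<noteq> \<mu>) \<longleftrightarrow>
      (\<forall>k. k \<noteq> 0 \<longrightarrow> \<not> (\<forall>b. \<mu> (int_iter st k b) = \<mu> b))" .
  then show ?thesis by (simp add: nonperiodic_points_def)
qed

lemma dense_imp_Top:
  assumes dense: "gelfand_topology smul closure_of nonperiodic_points smul st = characters smul"
  shows "PerCond smul st"
  unfolding PerCond_def
proof (intro allI impI)
  fix k :: int and x
  assume k: "k \<noteq> 0" and h: "\<forall>\<mu>\<in>characters smul. \<mu> x \<noteq> 0 \<longrightarrow> (\<forall>b. \<mu> (int_iter st k b) = \<mu> b)"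
  show "x = 0"
  proof (rule semisimple_zero[OF ss], rule ccontr)
    fix \<mu> assume mu: "\<mu> \<in> characters smul" and nz: "\<mu> x \<noteq> 0"
    have op: "openin (gelfand_topology smul) {\<nu> \<in> characters smul. \<nu> x \<in> - {0}}"
      by (rule gelfand_openin_basic) (simp add: open_Compl)
    have "\<mu> \<in> gelfand_topology smul closure_of nonperiodic_points smul st" using dense mu by simp
    then have cl: "\<And>T. \<mu> \<in> T \<Longrightarrow> openin (gelfand_topology smul) T \<Longrightarrow> \<exists>y. y \<in> nonperiodic_points smul st \<and> y \<in> T"
      unfolding in_closure_of by blast
    have "\<mu> \<in> {\<nu> \<in> characters smul. \<nu> x \<in> - {0}}" using mu nz by simp
    from cl[OF this op] obtain \<nu> where nu: "\<nu> \<in> nonperiodic_points smul st" "\<nu> \<in> {\<nu> \<in> characters smul. \<nu> x \<in> - {0}}"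
      by blast
    from nu(1) have n1: "\<nu> \<in> characters smul" and n2: "\<not> (\<forall>b. \<nu> (int_iter st k b) = \<nu> b)"
      using k unfolding nonperiodic_iff by blast+
    have "\<nu> x \<noteq> 0" using nu(2) by simp
    then have "\<forall>b. \<nu> (int_iter st k b) = \<nu> b" using h n1 by blast
    then show False using n2 by blast
  qed
qed

lemma Top_imp_dense:
  assumes top: "PerCond smul st"
  shows "gelfand_topology smul closure_of nonperiodic_points smul st = characters smul"
proof (rule ccontr)
  let ?GT = "gelfand_topology smul"
  let ?D = "characters smul"
  assume "?GT closure_of nonperiodic_points smul st \<noteq> ?D"
  moreover have "?GT closure_of nonperiodic_points smul st \<subseteq> ?D"
    using closure_of_subset_topspace gelfand_topspace by metis
  ultimately obtain \<phi>0 where phi0: "\<phi>0 \<in> ?D" "\<phi>0 \<notin> ?GT closure_of nonperiodic_points smul st"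
    by blast
  then have "\<not> (\<forall>T. \<phi>0 \<in> T \<and> openin ?GT T \<longrightarrow> (\<exists>y. y \<in> nonperiodic_points smul st \<and> y \<in> T))"
    unfolding in_closure_of gelfand_topspace by simp
  then obtain V where V: "\<phi>0 \<in> V" "openin ?GT V" "\<And>y. y \<in> nonperiodic_points smul st \<Longrightarrow> y \<notin> V"
    by blast
  have "closedin ?GT (topspace ?GT - V)" using V(2) by (rule closedin_diff[OF closedin_topspace])
  then have clV: "closedin ?GT (?D - V)" by (simp only: gelfand_topspace)
  have "\<phi>0 \<in> ?D - (?D - V)" using phi0(1) V(1) by blast
  with clV have "\<exists>a. (\<forall>\<mu>\<in>?D - V. \<mu> a = 0) \<and> \<phi>0 a \<noteq> 0"
    using cr unfolding completely_regular_def by blast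
  then obtain a where a: "\<And>\<mu>. \<mu> \<in> ?D - V \<Longrightarrow> \<mu> a = 0" "\<phi>0 a \<noteq> 0"
    by blast
  define \<epsilon> where "\<epsilon> = cmod (\<phi>0 a) / 2"
  have eps: "\<epsilon> > 0" using a(2) by (simp add: \<epsilon>_def)
  have periodic: "\<exists>k. k \<noteq> 0 \<and> (\<forall>b. \<mu> (int_iter st k b) = \<mu> b)" if "\<mu> \<in> ?D" "\<mu> a \<noteq> 0" for \<mu>
  proof -
    have "\<mu> \<in> V" using a(1) that by blast
    then have "\<mu> \<notin> nonperiodic_points smul st" using V(3) by blast
    then show ?thesis using that(1) by (auto simp: nonperiodic_iff)
  qed
  define K where "K = {\<mu> \<in> ?D. \<epsilon> \<le> cmod (\<mu> a)}"
  \<comment> \<open>compactness of K\<close>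
  define A1 where "A1 = {\<mu> \<in> topspace PT. \<forall>p::'a\<times>'a. \<mu> (fst p + snd p) = \<mu> (fst p) + \<mu> (snd p)}"
  define A2 where "A2 = {\<mu> \<in> topspace PT. \<forall>p::complex\<times>'a. \<mu> (smul (fst p) (snd p)) = fst p * \<mu> (snd p)}"
  define A3 where "A3 = {\<mu> \<in> topspace PT. \<forall>p::'a\<times>'a. \<mu> (fst p * snd p) = \<mu> (fst p) * \<mu> (snd p)}"
  define A4 where "A4 = {\<mu> \<in> topspace PT. cmod (\<mu> a) \<in> {\<epsilon>..}}"
  have cA1: "closedin PT A1" unfolding A1_def
    by (rule closedin_eq_family) (auto intro!: continuous_map_add proj_cont)
  have cA2: "closedin PT A2" unfolding A2_def
    by (rule closedin_eq_family) (auto intro!: continuous_map_cmult proj_cont)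
  have cA3: "closedin PT A3" unfolding A3_def
    by (rule closedin_eq_family) (auto intro!: continuous_map_mult' proj_cont)
  have cA4: "closedin PT A4" unfolding A4_def
    by (rule closedin_continuous_map_preimage) (auto intro!: continuous_map_norm proj_cont)
  have KA: "K = A1 \<inter> A2 \<inter> A3 \<inter> A4"
  proof
    show "K \<subseteq> A1 \<inter> A2 \<inter> A3 \<inter> A4"
      by (auto simp: K_def A1_def A2_def A3_def A4_def characters_def)
    show "A1 \<inter> A2 \<inter> A3 \<inter> A4 \<subseteq> K"
    proof
      fix \<mu> assume m: "\<mu> \<in> A1 \<inter> A2 \<inter> A3 \<inter> A4"
      then have "\<mu> a \<noteq> 0" using eps by (auto simp: A4_def)
      then have "\<mu> \<noteq> (\<lambda>_. 0)" by auto
      then show "\<mu> \<in> K" using m by (auto simp: K_def A1_def A2_def A3_def A4_def characters_def)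
    qed
  qed
  have cK: "closedin PT K" unfolding KA using cA1 cA2 cA3 cA4 by (intro closedin_Int)
  have cball: "compactin PT (PiE UNIV (\<lambda>x. cball 0 (norm x)))"
    by (simp add: compactin_PiE)
  have Ksub: "K \<subseteq> PiE UNIV (\<lambda>x. cball 0 (norm x))"
    using char_bound[OF cbs] by (auto simp: K_def)
  have compK: "compactin PT K"
    using compact_Int_closedin[OF cball cK] Ksub by (simp add: Int_absorb1)
  define X0 where "X0 = subtopology PT K"
  have X0c: "compact_space X0" unfolding X0_def by (rule compact_space_subtopology[OF compK])
  have X0H: "Hausdorff_space X0" unfolding X0_def
    by (rule Hausdorff_space_subtopology) (simp add: Hausdorff_space_product_topology)
  define W0 where "W0 = {\<mu> \<in> K. \<epsilon> < cmod (\<mu> a)}"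
  define T' where "T' = {\<mu> \<in> topspace PT. cmod (\<mu> a) \<in> {\<epsilon><..}}"
  have T'o: "openin PT T'" unfolding T'_def
    by (rule openin_continuous_map_preimage) (auto intro!: continuous_map_norm proj_cont)
  have W0T: "W0 = T' \<inter> K" by (auto simp: W0_def T'_def)
  have W0o: "openin X0 W0" unfolding X0_def openin_subtopology using T'o W0T by blast
  define Y0 where "Y0 = subtopology X0 W0"
  have Y0sub: "Y0 = subtopology PT W0"
    unfolding Y0_def X0_def subtopology_subtopology using W0T by (simp add: Int_absorb1 Int_commute)
  have Y0lc: "locally_compact_space Y0" unfolding Y0_def
    using locally_compact_space_open_subset X0H compact_imp_locally_compact_space[OF X0c] W0o by blast
  have Y0r: "regular_space Y0" unfolding Y0_def
    by (rule regular_space_subtopology) (rule compact_Hausdorff_imp_regular_space[OF X0c X0H])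
  have Y0top: "topspace Y0 = W0" by (simp add: Y0sub)
  define P where "P = (\<lambda>k. {\<mu> \<in> topspace Y0. \<forall>b. \<mu> (int_iter st k b) = \<mu> b})"
  define G where "G = P ` (UNIV - {0})"
  have cG: "countable G" unfolding G_def by simp
  have UG: "\<Union>G = W0"
  proof
    show "\<Union>G \<subseteq> W0" by (auto simp: G_def P_def Y0top)
    show "W0 \<subseteq> \<Union>G"
    proof
      fix \<mu> assume m: "\<mu> \<in> W0"
      then have "\<mu> \<in> ?D" "\<mu> a \<noteq> 0" using eps by (auto simp: W0_def K_def)
      then obtain k where "k \<noteq> 0" "\<forall>b. \<mu> (int_iter st k b) = \<mu> b" using periodic by blast
      then show "\<mu> \<in> \<Union>G" using m by (auto simp: G_def P_def Y0top)
    qed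
  qed
  have phiW: "\<phi>0 \<in> W0"
    using phi0(1) a(2) eps by (auto simp: W0_def K_def \<epsilon>_def)
  have "Y0 interior_of \<Union>G \<noteq> {}" using UG phiW Y0top by (metis interior_of_topspace empty_iff)
  then obtain k where k: "k \<noteq> 0" "Y0 interior_of P k \<noteq> {}"
  proof -
    assume r: "\<And>k. k \<noteq> 0 \<Longrightarrow> Y0 interior_of P k \<noteq> {} \<Longrightarrow> thesis"
    have clo: "closedin Y0 (P k)" for k
      unfolding P_def
      by (rule closedin_eq_family) (auto intro!: continuous_map_from_subtopology proj_cont simp: Y0sub)
    show thesis
    proof (rule ccontr)
      assume "\<not> thesis"
      then have "\<And>T. T \<in> G \<Longrightarrow> closedin Y0 T \<and> Y0 interior_of T = {}"
        using r clo by (auto simp: G_def)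
      then have "Y0 interior_of \<Union>G = {}"
        using Baire_category_alt[of Y0 G] Y0lc Y0r cG by blast
      then show False using \<open>Y0 interior_of \<Union>G \<noteq> {}\<close> by blast
    qed
  qed
  define Oset where "Oset = Y0 interior_of P k"
  obtain \<psi> where psi: "\<psi> \<in> Oset" using k(2) by (auto simp: Oset_def)
  have OP: "Oset \<subseteq> P k" unfolding Oset_def by (rule interior_of_subset)
  have "openin Y0 Oset" by (simp add: Oset_def)
  then obtain T where T: "openin PT T" "Oset = T \<inter> W0" unfolding Y0sub openin_subtopology by blast
  have OD: "Oset = ?D \<inter> (T \<inter> T')"
    using T(2) W0T by (auto simp: K_def T'_def)
  have Oo: "openin ?GT Oset" unfolding OD
    by (rule PT_open_gelfand) (intro openin_Int T(1) T'o)
  have "closedin ?GT (topspace ?GT - Oset)" using Oo by (rule closedin_diff[OF closedin_topspace])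
  then have clO: "closedin ?GT (?D - Oset)" by (simp only: gelfand_topspace)
  have psiD: "\<psi> \<in> ?D" using psi OD by blast
  have "\<psi> \<in> ?D - (?D - Oset)" using psiD psi by blast
  with clO have "\<exists>b. (\<forall>\<mu>\<in>?D - Oset. \<mu> b = 0) \<and> \<psi> b \<noteq> 0"
    using cr unfolding completely_regular_def by blast
  then obtain b where b: "\<And>\<mu>. \<mu> \<in> ?D - Oset \<Longrightarrow> \<mu> b = 0" "\<psi> b \<noteq> 0"
    by blast
  have "\<forall>\<mu>\<in>?D. \<mu> b \<noteq> 0 \<longrightarrow> (\<forall>c. \<mu> (int_iter st k c) = \<mu> c)"
  proof (intro ballI impI)
    fix \<mu> assume "\<mu> \<in> ?D" "\<mu> b \<noteq> 0"
    then have "\<mu> \<in> Oset" using b(1) by blast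
    then show "\<forall>c. \<mu> (int_iter st k c) = \<mu> c" using OP by (auto simp: P_def)
  qed
  then have "b = 0" using top k(1) unfolding PerCond_def by blast
  then show False using b(2) char_zero[OF psiD] by simp
qed

lemma dense_iff_Top:
  "gelfand_topology smul closure_of nonperiodic_points smul st = characters smul \<longleftrightarrow> PerCond smul st"
  using dense_imp_Top Top_imp_dense by blast

end

theorem theorem4p8:
  fixes smul :: "complex \<Rightarrow> 'a::{comm_ring,real_normed_algebra,banach} \<Rightarrow> 'a"
    and st :: "'a \<Rightarrow> 'a"
  assumes "complex_banach_scalar smul"
    and "completely_regular smul"
    and "semisimple smul"
    and "algebra_automorphism smul st"
  shows "(gelfand_topology smul closure_of nonperiodic_points smul st = characters smul
           \<longleftrightarrow> cp_maximal_abelian (\<lambda>c f \<mu>. c * f \<mu>) (hat_map st)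
                 (range (gelfand smul)) (cp_emb ` range (gelfand smul)))
       \<and> (cp_maximal_abelian smul st UNIV (cp_emb ` UNIV)
           \<longleftrightarrow> gelfand_topology smul closure_of nonperiodic_points smul st = characters smul)"
  using dense_iff_Top[OF assms(1,3,4,2)] max1_iff[OF assms(1,3,4)] max2_iff[OF assms(1,3,4)]
    Cond1_iff[OF assms(1,3,4)] Cond2_iff[OF assms(1,3,4)]
  by blast


end
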